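(* Fix $y_1\in T_2$ and for each integer $m>1$ set $$\Theta_m(y_1):=\Big\{y\in T_2:\ \beta(y,y_1)\in\Big[\frac{\pi}{2}-\frac1m,\frac{\pi}{2}\Big]\Big\}.$$ Unless $\Theta_m(y_1)$ is empty for all sufficiently large $m$, there exist $M>0$ and $K>0$ such that $$|s^+(y_1)-s^+(y)|\ge K|y_1-y|\qquad\text{for all } y\in\Theta_m(y_1)\text{ and all } m>M.$$
   Context: Setting. $n>1$, $\mathbf S^n$ the unit sphere in $\mathbf R^{n+1}$; $(\mu,\nu)$ symmetrically suitable Borel probability measures on $\mathbf S^n$ (there is $\epsilon>0$ with $\epsilon\mathcal H^n\le\mu,\nu\le\epsilon^{-1}\mathcal H^n$). For optimal transport with cost $|x-y|^2$, by Gangbo–McCann there is a convex potential $\psi$ with homeomorphism $t^+:\mathbf S^n\to\mathbf S^n$, its inverse $s^+:=(t^+)^{-1}$, a bivalent target set $T_2\subset\mathbf S^n$ and a continuous injective map $s^-:T_2\to\mathbf S^n$ such that for $y\in T_2$: $s^+(y)\ne s^-(y)$, $y\cdot s^+(y)>0$, $y\cdot s^-(y)<0$, and $s^+(y)-s^-(y)=\omega(y)y$ with $\omega(y)>0$; moreover $(s^-(y_1)-s^-(y_0))\cdot(y_1-y_0)\ge0$ for $y_0,y_1\in T_2$ (monotonicity of $\partial\psi$). For $y,y_1\in T_2$ with $y\ne\pm y_1$, $\beta(y,y_1)$ denotes the angle $\arccos\frac{a\cdot b}{|a||b|}$ between $a=y_1-y$ and $b=\omega(y_1)y_1-\omega(y)y$.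 *)

theory Defs
  imports "HOL-Analysis.Analysis"
begin

definition beta_angle :: "('a::real_inner \<Rightarrow> real) \<Rightarrow> 'a \<Rightarrow> 'a \<Rightarrow> real" where
  "beta_angle \<omega> y y1 =
     (let a = y1 - y; b = \<omega> y1 *\<^sub>R y1 - \<omega> y *\<^sub>R y
      in arccos ((a \<bullet> b) / (norm a * norm b)))"

text \<open>Theta_m(y1): points y of T2 (with y distinct from y1 and -y1, where beta is defined)
  whose angle beta(y,y1) lies in [pi/2 - 1/m, pi/2].\<close>
definition Theta :: "'a::real_inner set \<Rightarrow> ('a \<Rightarrow> real) \<Rightarrow> nat \<Rightarrow> 'a \<Rightarrow> 'a set" where
  "Theta T2 \<omega> m y1 =
     {y \<in> T2. y \<noteq> y1 \<and> y \<noteq> - y1 \<and>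
        beta_angle \<omega> y y1 \<in> {pi/2 - 1 / real m .. pi/2}}"

end

theory Submission
  imports Defs
begin

theorem lemma6p9:
  fixes tp sp sm :: "real ^ 'n \<Rightarrow> real ^ 'n"
    and \<omega> :: "real ^ 'n \<Rightarrow> real"
    and T2 :: "(real ^ 'n) set"
    and y1 :: "real ^ 'n"
  assumes dim: "CARD('n) \<ge> 3"
    and homeo: "homeomorphism (sphere 0 1) (sphere 0 1) tp sp"
    and T2_sub: "T2 \<subseteq> sphere 0 1"
    and sm_cont: "continuous_on T2 sm"
    and sm_inj: "inj_on sm T2"
    and sm_into: "sm ` T2 \<subseteq> sphere 0 1"
    and neq: "\<And>y. y \<in> T2 \<Longrightarrow> sp y \<noteq> sm y"
    and sp_pos: "\<And>y. y \<in> T2 \<Longrightarrow> y \<bullet> sp y > 0"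
    and sm_neg: "\<And>y. y \<in> T2 \<Longrightarrow> y \<bullet> sm y < 0"
    and omega_pos: "\<And>y. y \<in> T2 \<Longrightarrow> \<omega> y > 0"
    and omega_eq: "\<And>y. y \<in> T2 \<Longrightarrow> sp y - sm y = \<omega> y *\<^sub>R y"
    and mono: "\<And>y0 y. y0 \<in> T2 \<Longrightarrow> y \<in> T2 \<Longrightarrow> (sm y - sm y0) \<bullet> (y - y0) \<ge> 0"
    and y1: "y1 \<in> T2"
    and nonempty: "\<not> (\<exists>M. \<forall>m::nat. m > M \<longrightarrow> Theta T2 \<omega> m y1 = {})"
  shows "\<exists>M::real. M > 0 \<and> (\<exists>K::real. K > 0 \<and>
           (\<forall>m::nat. m > 1 \<and> real m > M \<longrightarrow>
              (\<forall>y \<in> Theta T2 \<omega> m y1. norm (sp y1 - sp y) \<ge> K * norm (y1 - y))))"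
proof -
  have w1: "\<omega> y1 > 0" using omega_pos y1 by blast
  define M where "M = 12 / \<omega> y1"
  have spS: "\<And>z. z \<in> T2 \<Longrightarrow> sp z \<in> sphere 0 1"
    using homeo T2_sub unfolding homeomorphism_def by blast
  have unit: "\<And>z. z \<in> T2 \<Longrightarrow> z \<bullet> z = 1 \<and> sm z \<bullet> sm z = 1 \<and> sp z \<bullet> sp z = 1"
  proof -
    fix z assume z: "z \<in> T2"
    have "norm z = 1" using T2_sub z by auto
    moreover have "norm (sm z) = 1" using sm_into z by auto
    moreover have "norm (sp z) = 1" using spS z by auto
    ultimately show "z \<bullet> z = 1 \<and> sm z \<bullet> sm z = 1 \<and> sp z \<bullet> sp z = 1"
      by (simp add: norm_eq_1)
  qed
  have om: "\<And>z. z \<in> T2 \<Longrightarrow> \<omega> z = -2 * (z \<bullet> sm z)"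
  proof -
    fix z assume z: "z \<in> T2"
    have e: "sp z = sm z + \<omega> z *\<^sub>R z" using omega_eq[OF z] by (simp add: algebra_simps)
    have "sp z \<bullet> sp z = sm z \<bullet> sm z + 2 * \<omega> z * (z \<bullet> sm z) + \<omega> z * \<omega> z * (z \<bullet> z)"
      unfolding e by (simp add: inner_add_left inner_add_right inner_commute algebra_simps)
    hence "\<omega> z * (\<omega> z + 2 * (z \<bullet> sm z)) = 0" using unit[OF z] by (simp add: algebra_simps)
    thus "\<omega> z = -2 * (z \<bullet> sm z)" using omega_pos[OF z] by simp
  qed
  have yp: "\<And>z. z \<in> T2 \<Longrightarrow> z \<bullet> sp z = \<omega> z / 2"
  proof -
    fix z assume z: "z \<in> T2"
    have e: "sp z = sm z + \<omega> z *\<^sub>R z" using omega_eq[OF z] by (simp add: algebra_simps)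
    have "z \<bullet> sp z = z \<bullet> sm z + \<omega> z * (z \<bullet> z)" unfolding e by (simp add: inner_add_right)
    thus "z \<bullet> sp z = \<omega> z / 2" using unit[OF z] om[OF z] by simp
  qed
  have wle: "\<And>z. z \<in> T2 \<Longrightarrow> \<omega> z \<le> 2"
  proof -
    fix z assume z: "z \<in> T2"
    have "\<bar>z \<bullet> sm z\<bar> \<le> norm z * norm (sm z)" by (rule Cauchy_Schwarz_ineq2)
    also have "\<dots> = 1" using T2_sub sm_into z by (simp add: subset_iff image_subset_iff)
    finally show "\<omega> z \<le> 2" using om[OF z] by linarith
  qed
  show ?thesis
  proof (intro exI conjI allI impI ballI)
    show "M > 0" using w1 M_def by simp
    show "(1::real) > 0" by simp
    fix m :: nat and y assume m: "1 < m \<and> M < real m" and yT: "y \<in> Theta T2 \<omega> m y1"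
    have y: "y \<in> T2" and yne: "y \<noteq> y1"
      and beta: "beta_angle \<omega> y y1 \<ge> pi/2 - 1 / real m" using yT unfolding Theta_def by auto
    define a where "a = y1 - y"
    define b where "b = \<omega> y1 *\<^sub>R y1 - \<omega> y *\<^sub>R y"
    define d where "d = norm (sp y1 - sp y)"
    have uy: "y \<bullet> y = 1" and uy1: "y1 \<bullet> y1 = 1" using unit y y1 by auto
    have wy: "\<omega> y > 0" "\<omega> y \<le> 2" "\<omega> y1 \<le> 2" using omega_pos wle y y1 by auto
    have aa: "a \<bullet> a = 2 - 2 * (y \<bullet> y1)"
      unfolding a_def using uy uy1 by (simp add: inner_diff_left inner_diff_right inner_commute)
    have ab: "a \<bullet> b = (\<omega> y1 + \<omega> y) * (a \<bullet> a) / 2"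
      unfolding aa unfolding a_def b_def using uy uy1
      by (simp add: inner_diff_left inner_diff_right inner_commute algebra_simps)
    have bb: "b \<bullet> b = (\<omega> y1 - \<omega> y)^2 + \<omega> y1 * \<omega> y * (a \<bullet> a)"
      unfolding aa unfolding b_def using uy uy1
      by (simp add: inner_diff_left inner_diff_right inner_commute algebra_simps power2_eq_square)
    have na: "norm a > 0" using yne a_def by simp
    have aa2: "a \<bullet> a = (norm a)^2" by (simp add: power2_norm_eq_inner)
    have bb2: "b \<bullet> b = (norm b)^2" by (simp add: power2_norm_eq_inner)
    have p4: "\<omega> y1 * \<omega> y \<le> 4" using wy w1 mult_mono[of "\<omega> y1" 2 "\<omega> y" 2] by simp
    have "(norm b)^2 \<le> (\<omega> y1 - \<omega> y)^2 + 4 * (norm a)^2"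
      using bb bb2 aa2 mult_right_mono[OF p4, of "(norm a)^2"] by simp
    also have "\<dots> \<le> (\<bar>\<omega> y1 - \<omega> y\<bar> + 2 * norm a)^2"
    proof -
      have "0 \<le> \<bar>\<omega> y1 - \<omega> y\<bar> * norm a" by simp
      thus ?thesis by (simp add: power2_sum power2_abs power_mult_distrib)
    qed
    finally have "(norm b)^2 \<le> (\<bar>\<omega> y1 - \<omega> y\<bar> + 2 * norm a)^2" .
    hence nb: "norm b \<le> \<bar>\<omega> y1 - \<omega> y\<bar> + 2 * norm a"
      using power2_le_imp_le by fastforce
    have eqw: "(\<omega> y1 - \<omega> y) / 2 = y1 \<bullet> (sp y1 - sp y) + a \<bullet> sp y"
      using yp y y1 unfolding a_def by (simp add: inner_diff_left inner_diff_right inner_commute)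
    have c1: "\<bar>y1 \<bullet> (sp y1 - sp y)\<bar> \<le> d"
      using Cauchy_Schwarz_ineq2[of y1 "sp y1 - sp y"] T2_sub y1 d_def by auto
    have c2: "\<bar>a \<bullet> sp y\<bar> \<le> norm a"
      using Cauchy_Schwarz_ineq2[of a "sp y"] spS y by auto
    have wd: "\<bar>\<omega> y1 - \<omega> y\<bar> \<le> 2 * d + 2 * norm a"
    proof -
      have "\<bar>r3\<bar> \<le> 2*r1 + 2*r2" if "r3 / 2 = r4 + r5" "\<bar>r4\<bar> \<le> r1" "\<bar>r5\<bar> \<le> r2" for r1 r2 r3 r4 r5 :: real
        using that by (simp add: abs_le_iff)
      from this[OF eqw c1 c2] show ?thesis .
    qed
    have "(\<omega> y1 + \<omega> y) * (norm a)^2 > 0" using na w1 wy by simp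
    hence abpos: "a \<bullet> b > 0" using ab aa2 by simp
    hence nbp: "norm b > 0" by (metis inner_zero_right norm_le_zero_iff not_le order_less_irrefl)
    define x where "x = a \<bullet> b / (norm a * norm b)"
    have x0: "0 \<le> x" using abpos na nbp x_def by simp
    have x1: "x \<le> 1" using norm_cauchy_schwarz[of a b] na nbp x_def by (simp add: divide_le_eq_1)
    have ba: "beta_angle \<omega> y y1 = arccos x" unfolding beta_angle_def x_def a_def b_def Let_def by simp
    have m1: "real m \<ge> 2" using m by simp
    have t: "1 / real m \<le> 1/2" using m1 by (simp add: field_simps)
    have "x = cos (arccos x)" using x0 x1 by simp
    also have "\<dots> \<le> cos (pi/2 - 1 / real m)"
      apply (rule cos_monotone_0_pi_le)
      using beta ba t pi_gt3 arccos_ubound[of x] x0 x1 by auto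
    also have "\<dots> = sin (1 / real m)" by (simp add: cos_diff)
    also have "\<dots> \<le> 1 / real m" by (rule sin_x_le_x) simp
    finally have xm: "x \<le> 1 / real m" .
    have "(\<omega> y1 + \<omega> y) * (norm a)^2 / 2 \<le> norm a * norm b / real m"
      using xm ab aa2 na nbp unfolding x_def by (simp add: field_simps)
    hence "norm a * ((\<omega> y1 + \<omega> y) * norm a * real m) \<le> norm a * (2 * norm b)"
      using na m1 by (simp add: field_simps power2_eq_square)
    hence "(\<omega> y1 + \<omega> y) * norm a * real m \<le> 2 * norm b"
      using na by (simp add: mult_le_cancel_left_pos)
    moreover have "\<omega> y * norm a * real m \<ge> 0" using wy by simp
    moreover have "(\<omega> y1 + \<omega> y) * norm a * real m = \<omega> y1 * real m * norm a + \<omega> y * norm a * real m"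
      by (simp add: algebra_simps)
    ultimately have "\<omega> y1 * real m * norm a \<le> 2 * norm b" by linarith
    moreover have "\<omega> y1 * real m > 12" using m w1 M_def by (simp add: field_simps)
    ultimately have "12 * norm a \<le> 2 * norm b" using na
      mult_strict_right_mono[of 12 "\<omega> y1 * real m" "norm a"] by linarith
    hence "norm a \<le> d" using nb wd by linarith
    thus "norm (sp y1 - sp y) \<ge> 1 * norm (y1 - y)" using d_def a_def by simp
  qed
qed

end
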